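(* Let $X\in\mathbb{R}^{m\times n}$, $\lambda>0$, and let $f:\mathbb{R}^{m\times n}\to\mathbb{R}$ be an arbitrary function. Consider the original R-PCA problem $$\min_{A,E\in\mathbb{R}^{m\times n}} \operatorname{rank}(A)+\lambda f(E)\quad\text{s.t.}\quad X=A+E, \tag{P}$$ and the relaxed R-LatLRR problem $$\min_{Z\in\mathbb{R}^{n\times n},\,L\in\mathbb{R}^{m\times m},\,E\in\mathbb{R}^{m\times n}} \|Z\|_*+\|L\|_*+\lambda f(E)\quad\text{s.t.}\quad X-E=(X-E)Z+L(X-E). \tag{U}$$ (i) Let $(A^*,E^* )$ be any optimal solution of (P), let $r=\operatorname{rank}(A^* )$, and let $A^*=U_{A^*}\Sigma_{A^*}V_{A^*}^T$ be its skinny SVD. Let $\widehat W\in\mathbb{R}^{r\times r}$ be any matrix such that (a) $\widehat W$ is block diagonal with blocks compatible with $\Sigma_{A^*}$, i.e., $[\Sigma_{A^*}]_{ii}\neq[\Sigma_{A^*}]_{jj}$ implies $\widehat W_{ij}=0$; and (b) both $\widehat W$ and $I-\widehat W$ are positive semi-definite. Then $(Z^*,L^*,E^* )$ is a minimizer of (U), where $$Z^*=V_{A^*}\widehat WV_{A^*}^T,\qquad L^*=U_{A^*}(I-\widehat W)U_{A^*}^T.$$ (ii) Conversely, if $(Z^*,L^*,E^* )$ is any optimal solution of (U), then $(X-E^*,E^* )$ is a minimizer of (P).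
   Context: $\|\cdot\|_*$ denotes the nuclear norm (sum of singular values). The skinny SVD of a matrix $A$ of rank $r$ is $A=U_A\Sigma_AV_A^T$ with $U_A,V_A$ having $r$ orthonormal columns and $\Sigma_A$ an $r\times r$ diagonal matrix with positive diagonal entries. $I$ denotes the identity matrix of the appropriate size. *)

theory Defs
  imports "Jordan_Normal_Form.DL_Rank" "Jordan_Normal_Form.Char_Poly"
    "HOL-Computational_Algebra.Polynomial"
begin

definition mrank :: "real mat \<Rightarrow> nat" where
  "mrank A = vec_space.rank (dim_row A) (A :: real mat)"

(* Nuclear norm: sum of the singular values, i.e. of the square roots of the
   eigenvalues (with multiplicity) of A^T A. *)
definition nuclear_norm :: "real mat \<Rightarrow> real" where
  "nuclear_norm A = sum_mset (image_mset sqrt (proots (char_poly (transpose_mat A * A))))"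

definition skinny_svd :: "real mat \<Rightarrow> nat \<Rightarrow> real mat \<Rightarrow> real mat \<Rightarrow> real mat \<Rightarrow> bool" where
  "skinny_svd A r U S V \<longleftrightarrow>
     U \<in> carrier_mat (dim_row A) r \<and> V \<in> carrier_mat (dim_col A) r \<and> S \<in> carrier_mat r r \<and>
     transpose_mat U * U = 1\<^sub>m r \<and> transpose_mat V * V = 1\<^sub>m r \<and>
     diagonal_mat S \<and> (\<forall>i<r. S $$ (i, i) > 0) \<and>
     A = U * S * transpose_mat V"

definition psd :: "real mat \<Rightarrow> bool" where
  "psd W \<longleftrightarrow> square_mat W \<and> transpose_mat W = W \<and>
     (\<forall>x \<in> carrier_vec (dim_row W). x \<bullet> (W *\<^sub>v x) \<ge> 0)"

definition feasible_P :: "real mat \<Rightarrow> real mat \<Rightarrow> real mat \<Rightarrow> bool" where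
  "feasible_P X A E \<longleftrightarrow> A \<in> carrier_mat (dim_row X) (dim_col X) \<and>
     E \<in> carrier_mat (dim_row X) (dim_col X) \<and> X = A + E"

definition minimizer_P :: "real mat \<Rightarrow> real \<Rightarrow> (real mat \<Rightarrow> real) \<Rightarrow> real mat \<Rightarrow> real mat \<Rightarrow> bool" where
  "minimizer_P X lam f A E \<longleftrightarrow> feasible_P X A E \<and>
     (\<forall>A' E'. feasible_P X A' E' \<longrightarrow> real (mrank A) + lam * f E \<le> real (mrank A') + lam * f E')"

definition feasible_U :: "real mat \<Rightarrow> real mat \<Rightarrow> real mat \<Rightarrow> real mat \<Rightarrow> bool" where
  "feasible_U X Z L E \<longleftrightarrow> Z \<in> carrier_mat (dim_col X) (dim_col X) \<and>
     L \<in> carrier_mat (dim_row X) (dim_row X) \<and>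
     E \<in> carrier_mat (dim_row X) (dim_col X) \<and>
     X - E = (X - E) * Z + L * (X - E)"

definition minimizer_U :: "real mat \<Rightarrow> real \<Rightarrow> (real mat \<Rightarrow> real) \<Rightarrow> real mat \<Rightarrow> real mat \<Rightarrow> real mat \<Rightarrow> bool" where
  "minimizer_U X lam f Z L E \<longleftrightarrow> feasible_U X Z L E \<and>
     (\<forall>Z' L' E'. feasible_U X Z' L' E' \<longrightarrow>
        nuclear_norm Z + nuclear_norm L + lam * f E \<le> nuclear_norm Z' + nuclear_norm L' + lam * f E')"

end

theory Submission
  imports Defs "Jordan_Normal_Form.Schur_Decomposition"
    "HOL-Computational_Algebra.Fundamental_Theorem_Algebra"
begin


definition tr :: "'a::comm_ring_1 mat \<Rightarrow> 'a" where
  "tr A = (\<Sum>i<dim_row A. A $$ (i,i))"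

lemma tr_mult_comm:
  fixes A B :: "'a::comm_ring_1 mat"
  assumes A: "A \<in> carrier_mat m n" and B: "B \<in> carrier_mat n m"
  shows "tr (A * B) = tr (B * A)"
proof -
  have "tr (A * B) = (\<Sum>i<m. \<Sum>j<n. A $$ (i,j) * B $$ (j,i))"
    unfolding tr_def using A B
    by (auto simp: scalar_prod_def intro!: sum.cong simp: atLeast0LessThan)
  also have "\<dots> = (\<Sum>j<n. \<Sum>i<m. B $$ (j,i) * A $$ (i,j))"
    by (subst sum.swap) (simp add: mult.commute)
  also have "\<dots> = tr (B * A)"
    unfolding tr_def using A B
    by (auto simp: scalar_prod_def intro!: sum.cong simp: atLeast0LessThan)
  finally show ?thesis .
qed

lemma sym_real_eigen:
  fixes S :: "real mat"
  assumes S: "S \<in> carrier_mat n n" and sym: "transpose_mat S = S" and n: "n > 0"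
  shows "\<exists>e v. v \<in> carrier_vec n \<and> v \<noteq> 0\<^sub>v n \<and> S *\<^sub>v v = e \<cdot>\<^sub>v v"
proof -
  define Sc where "Sc = map_mat complex_of_real S"
  have Sc: "Sc \<in> carrier_mat n n" using S unfolding Sc_def by auto
  have "degree (char_poly Sc) = n" using degree_monic_char_poly[OF Sc] by auto
  hence "\<not> constant (poly (char_poly Sc))" using n by (simp add: constant_degree)
  then obtain z where "poly (char_poly Sc) z = 0" using fundamental_theorem_of_algebra by blast
  hence "eigenvalue Sc z" using eigenvalue_root_char_poly[OF Sc] by auto
  then obtain v where ev: "eigenvector Sc v z" unfolding eigenvalue_def by auto
  hence v: "v \<in> carrier_vec n" and v0: "v \<noteq> 0\<^sub>v n" and Sv: "Sc *\<^sub>v v = z \<cdot>\<^sub>v v"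
    unfolding eigenvector_def using Sc by auto
  have Svi: "(\<Sum>j<n. complex_of_real (S $$ (i,j)) * v $ j) = z * v $ i" if i: "i < n" for i
  proof -
    have "(Sc *\<^sub>v v) $ i = z * v $ i" using Sv i v by auto
    moreover have "(Sc *\<^sub>v v) $ i = (\<Sum>j<n. complex_of_real (S $$ (i,j)) * v $ j)"
      using i Sc S v unfolding Sc_def by (auto simp: scalar_prod_def atLeast0LessThan)
    ultimately show ?thesis by simp
  qed
  define w where "w = (\<Sum>i<n. \<Sum>j<n. cnj (v $ i) * complex_of_real (S $$ (i,j)) * v $ j)"
  define N where "N = (\<Sum>i<n. cnj (v $ i) * v $ i)"
  have wN: "w = z * N"
  proof -
    have "w = (\<Sum>i<n. cnj (v $ i) * (\<Sum>j<n. complex_of_real (S $$ (i,j)) * v $ j))"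
      unfolding w_def by (simp add: sum_distrib_left mult.assoc)
    also have "\<dots> = (\<Sum>i<n. cnj (v $ i) * (z * v $ i))" using Svi by auto
    also have "\<dots> = z * N" unfolding N_def by (simp add: sum_distrib_left ac_simps)
    finally show ?thesis .
  qed
  have Sij: "S $$ (j,i) = S $$ (i,j)" if "i < n" "j < n" for i j
    using arg_cong[OF sym, of "\<lambda>M. M $$ (i,j)"] that S by auto
  have "cnj w = (\<Sum>i<n. \<Sum>j<n. v $ i * complex_of_real (S $$ (i,j)) * cnj (v $ j))"
    unfolding w_def by (simp add: cnj_sum)
  also have "\<dots> = (\<Sum>j<n. \<Sum>i<n. v $ i * complex_of_real (S $$ (i,j)) * cnj (v $ j))"
    by (rule sum.swap)
  also have "\<dots> = w" unfolding w_def
    by (intro sum.cong refl, simp add: Sij ac_simps)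
  finally have cw: "cnj w = w" .
  have Nre: "N = complex_of_real (\<Sum>i<n. (cmod (v $ i))^2)"
    unfolding N_def of_real_sum by (intro sum.cong refl) (metis complex_norm_square mult.commute of_real_power)
  obtain i0 where i0: "i0 < n" "v $ i0 \<noteq> 0" using v0 v by (metis carrier_vecD eq_vecI index_zero_vec)
  have "(\<Sum>i<n. (cmod (v $ i))^2) > 0"
    by (rule sum_pos2[of _ i0], insert i0, auto)
  hence N0a: "N \<noteq> 0" using Nre by (metis of_real_eq_0_iff order_less_irrefl)
  have N0b: "Im N = 0" unfolding Nre by (rule Im_complex_of_real)
  note N0 = N0a N0b
  have Iw: "Im w = 0" using arg_cong[OF cw, of Im] by simp
  have ReN: "Re N \<noteq> 0" using N0 complex_eq_iff by auto
  have "Im (z * N) = Im z * Re N" using N0b by simp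
  hence zr: "Im z = 0" using Iw wN ReN by (metis mult_eq_0_iff)
  define e where "e = Re z"
  have ze: "z = complex_of_real e" using zr unfolding e_def by (simp add: complex_eq_iff)
  define vr where "vr = vec n (\<lambda>i. Re (v $ i))"
  define vi where "vi = vec n (\<lambda>i. Im (v $ i))"
  have eqr: "S *\<^sub>v vr = e \<cdot>\<^sub>v vr"
  proof (rule eq_vecI)
    fix i assume "i < dim_vec (e \<cdot>\<^sub>v vr)"
    hence i: "i < n" unfolding vr_def by auto
    have "Re (\<Sum>j<n. complex_of_real (S $$ (i,j)) * v $ j) = Re (z * v $ i)" using Svi[OF i] by simp
    thus "(S *\<^sub>v vr) $ i = (e \<cdot>\<^sub>v vr) $ i" using i S unfolding vr_def ze
      by (simp add: scalar_prod_def Re_sum atLeast0LessThan)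
  qed (insert S, auto simp: vr_def)
  have eqi: "S *\<^sub>v vi = e \<cdot>\<^sub>v vi"
  proof (rule eq_vecI)
    fix i assume "i < dim_vec (e \<cdot>\<^sub>v vi)"
    hence i: "i < n" unfolding vi_def by auto
    have "Im (\<Sum>j<n. complex_of_real (S $$ (i,j)) * v $ j) = Im (z * v $ i)" using Svi[OF i] by simp
    thus "(S *\<^sub>v vi) $ i = (e \<cdot>\<^sub>v vi) $ i" using i S unfolding vi_def ze
      by (simp add: scalar_prod_def Im_sum atLeast0LessThan)
  qed (insert S, auto simp: vi_def)
  show ?thesis
  proof (cases "vr = 0\<^sub>v n")
    case False
    moreover have "vr \<in> carrier_vec n" unfolding vr_def by simp
    ultimately show ?thesis using eqr by blast
  next
    case True
    hence "Re (v $ i0) = 0" using i0 unfolding vr_def by (metis index_vec index_zero_vec(1))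
    hence "Im (v $ i0) \<noteq> 0" using i0 complex_eq_iff by auto
    hence "vi \<noteq> 0\<^sub>v n" using i0 unfolding vi_def by (metis index_vec index_zero_vec(1))
    moreover have "vi \<in> carrier_vec n" unfolding vi_def by simp
    ultimately show ?thesis using eqi by blast
  qed
qed



lemma orth_completion:
  fixes v :: "real vec"
  assumes v: "v \<in> carrier_vec n" and v0: "v \<noteq> 0\<^sub>v n"
  shows "\<exists>W. W \<in> carrier_mat n n \<and> transpose_mat W * W = 1\<^sub>m n \<and> W * transpose_mat W = 1\<^sub>m n
     \<and> col W 0 = (1 / sqrt (v \<bullet> v)) \<cdot>\<^sub>v v"
proof -
  interpret cof_vec_space n "TYPE(real)" .
  define b where "b = basis_completion v"
  from basis_completion[OF v v0, folded b_def]
  have b: "set b \<subseteq> carrier_vec n" "distinct b" "\<not> lin_dep (set b)" "length b = n" "hd b = v" by auto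
  have n: "n > 0" using v0 v by (metis carrier_vecD eq_vecI less_nat_zero_code neq0_conv index_zero_vec(2))
  obtain vs where bv: "b = v # vs" using b(4,5) n by (cases b, auto)
  define ws where "ws = gram_schmidt n b"
  from gram_schmidt_result[OF b(1) b(2) b(3) ws_def]
  have ws: "corthogonal ws" "set ws \<subseteq> carrier_vec n" "length ws = n" using b(4) by auto
  have hd: "hd ws = v" using gram_schmidt_hd[OF v, of vs] bv ws_def by simp
  have ws0: "ws ! 0 = v" using hd ws(3) n by (cases ws, auto)
  have wsc: "ws ! i \<in> carrier_vec n" if "i < n" for i using ws that by auto
  have orth: "ws ! i \<bullet> ws ! j = 0 \<longleftrightarrow> i \<noteq> j" if "i < n" "j < n" for i j
    using corthogonalD[OF ws(1), of i j] that ws(3) by (simp add: vec_conjugate_real)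
  have pos: "ws ! i \<bullet> ws ! i > 0" if i: "i < n" for i
  proof -
    have "ws ! i \<bullet> ws ! i \<ge> 0" unfolding scalar_prod_def by (auto intro: sum_nonneg)
    thus ?thesis using orth[OF i i] by auto
  qed
  define c where "c i = 1 / sqrt (ws ! i \<bullet> ws ! i)" for i
  define us where "us = map (\<lambda>i. c i \<cdot>\<^sub>v ws ! i) [0..<n]"
  define W where "W = mat_of_cols n us"
  have W: "W \<in> carrier_mat n n" unfolding W_def us_def by auto
  have colW: "col W i = c i \<cdot>\<^sub>v ws ! i" if "i < n" for i
    unfolding W_def us_def using that wsc[OF that] by (subst col_mat_of_cols) auto
  have WW: "transpose_mat W * W = 1\<^sub>m n"
  proof (rule eq_matI)
    fix i j assume ij: "i < dim_row (1\<^sub>m n)" "j < dim_col (1\<^sub>m n)"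
    hence i: "i < n" and j: "j < n" by auto
    have "(transpose_mat W * W) $$ (i,j) = col W i \<bullet> col W j" using i j W by auto
    also have "\<dots> = c i * c j * (ws ! i \<bullet> ws ! j)" unfolding colW[OF i] colW[OF j]
      using wsc[OF i] wsc[OF j] by simp
    also have "\<dots> = 1\<^sub>m n $$ (i,j)"
    proof (cases "i = j")
      case True
      have "c i * c i * (ws ! i \<bullet> ws ! i) = 1" unfolding c_def using pos[OF i]
        by (simp add: field_simps)
      thus ?thesis using True i by simp
    next
      case False
      thus ?thesis using orth[OF i j] i j by simp
    qed
    finally show "(transpose_mat W * W) $$ (i,j) = 1\<^sub>m n $$ (i,j)" .
  qed (insert W, auto)
  have WW2: "W * transpose_mat W = 1\<^sub>m n"
    by (rule mat_mult_left_right_inverse[OF _ W WW], insert W, auto)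
  have "col W 0 = (1 / sqrt (v \<bullet> v)) \<cdot>\<^sub>v v" using colW[OF n] ws0 unfolding c_def by simp
  thus ?thesis using W WW WW2 by blast
qed

lemma spectral_real_sym:
  fixes S :: "real mat"
  assumes "S \<in> carrier_mat n n" and "transpose_mat S = S"
  shows "\<exists>Q D. Q \<in> carrier_mat n n \<and> D \<in> carrier_mat n n \<and> transpose_mat Q * Q = 1\<^sub>m n
     \<and> Q * transpose_mat Q = 1\<^sub>m n \<and> diagonal_mat D \<and> S = Q * D * transpose_mat Q"
  using assms
proof (induction n arbitrary: S)
  case 0
  thus ?case by (intro exI[of _ "1\<^sub>m 0"] exI[of _ S]) (auto simp: diagonal_mat_def)
next
  case (Suc k S)
  let ?n = "Suc k"
  have S: "S \<in> carrier_mat ?n ?n" and sym: "transpose_mat S = S" using Suc by auto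
  obtain e v where v: "v \<in> carrier_vec ?n" "v \<noteq> 0\<^sub>v ?n" and ev: "S *\<^sub>v v = e \<cdot>\<^sub>v v"
    using sym_real_eigen[OF S sym] by auto
  obtain W where W: "W \<in> carrier_mat ?n ?n" and WW: "transpose_mat W * W = 1\<^sub>m ?n"
    and WW2: "W * transpose_mat W = 1\<^sub>m ?n" and cW: "col W 0 = (1 / sqrt (v \<bullet> v)) \<cdot>\<^sub>v v"
    using orth_completion[OF v] by blast
  have evu: "S *\<^sub>v col W 0 = e \<cdot>\<^sub>v col W 0"
    unfolding cW using S v ev by (simp add: mult_mat_vec smult_smult_assoc mult.commute)
  define M where "M = transpose_mat W * (S * W)"
  have M: "M \<in> carrier_mat ?n ?n" unfolding M_def using W S by auto
  have Msym: "transpose_mat M = M"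
  proof -
    have SW: "S * W \<in> carrier_mat ?n ?n" using S W by auto
    have "transpose_mat M = transpose_mat (S * W) * W"
      unfolding M_def using transpose_mult[OF _ SW, of "transpose_mat W"] W by auto
    also have "transpose_mat (S * W) = transpose_mat W * S"
      using transpose_mult[OF S W] sym by simp
    also have "transpose_mat W * S * W = M" unfolding M_def
      using W S by (simp add: assoc_mult_mat[of _ ?n ?n _ ?n _ ?n])
    finally show ?thesis .
  qed
  have Mi0: "M $$ (i, 0) = (if i = 0 then e else 0)" if i: "i < ?n" for i
  proof -
    have "M $$ (i,0) = col W i \<bullet> (S *\<^sub>v col W 0)"
      unfolding M_def using i W S by (simp add: col_mult2[of _ ?n ?n _ ?n] mult_mat_vec_def)
    also have "\<dots> = e * (col W i \<bullet> col W 0)" unfolding evu using i W by simp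
    also have "col W i \<bullet> col W 0 = (transpose_mat W * W) $$ (i,0)" using i W by simp
    also have "\<dots> = (if i = 0 then 1 else 0)" unfolding WW using i by simp
    finally show ?thesis by simp
  qed
  have M0j: "M $$ (0, j) = (if j = 0 then e else 0)" if j: "j < ?n" for j
    using Mi0[OF j] arg_cong[OF Msym, of "\<lambda>A. A $$ (0,j)"] j M by auto
  define A3 where "A3 = mat k k (\<lambda>(i,j). M $$ (Suc i, Suc j))"
  have A3: "A3 \<in> carrier_mat k k" unfolding A3_def by auto
  have A3sym: "transpose_mat A3 = A3"
  proof (rule eq_matI)
    fix i j assume "i < dim_row A3" "j < dim_col A3"
    hence ij: "i < k" "j < k" unfolding A3_def by auto
    show "transpose_mat A3 $$ (i,j) = A3 $$ (i,j)"
      using arg_cong[OF Msym, of "\<lambda>A. A $$ (Suc i, Suc j)"] ij M unfolding A3_def by auto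
  qed (auto simp: A3_def)
  obtain Q3 D3 where Q3: "Q3 \<in> carrier_mat k k" and D3: "D3 \<in> carrier_mat k k"
    and QQ3: "transpose_mat Q3 * Q3 = 1\<^sub>m k" and QQ3': "Q3 * transpose_mat Q3 = 1\<^sub>m k"
    and diag3: "diagonal_mat D3" and A3eq: "A3 = Q3 * D3 * transpose_mat Q3"
    using Suc.IH[OF A3 A3sym] by blast
  define E1 where "E1 = mat 1 1 (\<lambda>_. e)"
  have E1: "E1 \<in> carrier_mat 1 1" unfolding E1_def by auto
  have Mblock: "M = four_block_mat E1 (0\<^sub>m 1 k) (0\<^sub>m k 1) A3"
  proof (rule eq_matI)
    fix i j assume "i < dim_row (four_block_mat E1 (0\<^sub>m 1 k) (0\<^sub>m k 1) A3)"
      "j < dim_col (four_block_mat E1 (0\<^sub>m 1 k) (0\<^sub>m k 1) A3)"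
    hence ij: "i < ?n" "j < ?n" using E1 A3 by auto
    show "M $$ (i,j) = four_block_mat E1 (0\<^sub>m 1 k) (0\<^sub>m k 1) A3 $$ (i,j)"
    proof (cases "i = 0 \<or> j = 0")
      case True
      thus ?thesis using Mi0 M0j ij E1 A3 unfolding E1_def by auto
    next
      case False
      then obtain i' j' where "i = Suc i'" "j = Suc j'" by (cases i; cases j; auto)
      thus ?thesis using ij E1 A3 unfolding A3_def E1_def by auto
    qed
  qed (insert M E1 A3, auto)
  define B where "B = four_block_mat (1\<^sub>m 1) (0\<^sub>m 1 k) (0\<^sub>m k 1) Q3"
  define D where "D = four_block_mat E1 (0\<^sub>m 1 k) (0\<^sub>m k 1) D3"
  have B: "B \<in> carrier_mat ?n ?n" unfolding B_def using Q3 by auto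
  have D: "D \<in> carrier_mat ?n ?n" unfolding D_def using D3 E1 by auto
  have one1: "1\<^sub>m 1 \<in> carrier_mat 1 1" and z1k: "0\<^sub>m 1 k \<in> carrier_mat 1 k"
    and zk1: "0\<^sub>m k 1 \<in> carrier_mat k 1" and Q3t: "transpose_mat Q3 \<in> carrier_mat k k"
    and Q3D3: "Q3 * D3 \<in> carrier_mat k k" using Q3 D3 by auto
  have Bt: "transpose_mat B = four_block_mat (1\<^sub>m 1) (0\<^sub>m 1 k) (0\<^sub>m k 1) (transpose_mat Q3)"
    unfolding B_def using Q3 by (subst transpose_four_block_mat[OF one1 z1k zk1 Q3], auto)
  have BB: "transpose_mat B * B = 1\<^sub>m ?n"
    unfolding Bt unfolding B_def using Q3 QQ3
    by (subst mult_four_block_mat[OF one1 z1k zk1 Q3t one1 z1k zk1 Q3], auto)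
  have BDB: "B * D * transpose_mat B = M"
  proof -
    have BD: "B * D = four_block_mat E1 (0\<^sub>m 1 k) (0\<^sub>m k 1) (Q3 * D3)"
      unfolding B_def D_def using Q3 D3 E1
      by (subst mult_four_block_mat[OF one1 z1k zk1 Q3 E1 z1k zk1 D3], auto)
    have "B * D * transpose_mat B = four_block_mat E1 (0\<^sub>m 1 k) (0\<^sub>m k 1) (Q3 * D3 * transpose_mat Q3)"
      unfolding Bt BD using Q3 D3 E1
      by (subst mult_four_block_mat[OF E1 z1k zk1 Q3D3 one1 z1k zk1 Q3t], auto)
    thus ?thesis unfolding Mblock A3eq .
  qed
  define Q where "Q = W * B"
  have Q: "Q \<in> carrier_mat ?n ?n" unfolding Q_def using W B by auto
  have QQ: "transpose_mat Q * Q = 1\<^sub>m ?n"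
  proof -
    have "transpose_mat Q * Q = transpose_mat B * (transpose_mat W * W) * B"
      unfolding Q_def using W B
      by (simp add: transpose_mult[of _ ?n ?n] assoc_mult_mat[of _ ?n ?n _ ?n _ ?n])
    thus ?thesis using WW BB B by simp
  qed
  have QQ2: "Q * transpose_mat Q = 1\<^sub>m ?n"
    by (rule mat_mult_left_right_inverse[OF _ Q QQ], insert Q, auto)
  have "S = W * M * transpose_mat W"
  proof -
    have "W * M * transpose_mat W = (W * transpose_mat W) * S * (W * transpose_mat W)"
      unfolding M_def using W S
      by (simp add: assoc_mult_mat[of _ ?n ?n _ ?n _ ?n])
    thus ?thesis using WW2 S by simp
  qed
  also have "\<dots> = Q * D * transpose_mat Q"
    unfolding BDB[symmetric] Q_def using W B D
    by (simp add: transpose_mult[of _ ?n ?n] assoc_mult_mat[of _ ?n ?n _ ?n _ ?n])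
  finally have SQ: "S = Q * D * transpose_mat Q" .
  have diag: "diagonal_mat D"
    unfolding diagonal_mat_def
  proof (intro allI impI)
    fix i j assume ij: "i < dim_row D" "j < dim_col D" "i \<noteq> j"
    show "D $$ (i,j) = 0"
    proof (cases "i = 0 \<or> j = 0")
      case True
      thus ?thesis using ij D3 E1 unfolding D_def by auto
    next
      case False
      then obtain i' j' where "i = Suc i'" "j = Suc j'" by (cases i; cases j; auto)
      thus ?thesis using ij D3 E1 diag3 unfolding D_def diagonal_mat_def by auto
    qed
  qed
  show ?case using Q D QQ QQ2 diag SQ by blast
qed



lemma proots_linear_prod:
  "proots (\<Prod>a\<leftarrow>xs. [:- (a::real), 1:]) = mset xs"
proof (induction xs)
  case Nil thus ?case by simp
next
  case (Cons x xs)
  have nz: "(\<Prod>a\<leftarrow>xs. [:- a, 1:]) \<noteq> (0 :: real poly)"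
    by (auto simp: prod_list_zero_iff)
  have "proots (\<Prod>a\<leftarrow>x # xs. [:- a, 1:]) = proots [:- x, 1:] + proots (\<Prod>a\<leftarrow>xs. [:- a, 1:])"
    unfolding list.map prod_list.Cons using nz by (intro proots_mult) auto
  thus ?case using Cons by (simp add: proots_linear_factor)
qed

lemma diag_mult_left:
  fixes D A :: "'a::comm_ring_1 mat"
  assumes D: "D \<in> carrier_mat n n" and A: "A \<in> carrier_mat n p" and dg: "diagonal_mat D"
    and i: "i < n" and j: "j < p"
  shows "(D * A) $$ (i,j) = D $$ (i,i) * A $$ (i,j)"
proof -
  have "(D * A) $$ (i,j) = (\<Sum>l\<in>{0..<n}. D $$ (i,l) * A $$ (l,j))"
    using D A i j by (simp add: scalar_prod_def)
  also have "\<dots> = (\<Sum>l\<in>{0..<n}. if l = i then D $$ (i,i) * A $$ (i,j) else 0)"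
    using dg D i unfolding diagonal_mat_def by (intro sum.cong) auto
  also have "\<dots> = D $$ (i,i) * A $$ (i,j)" using i by simp
  finally show ?thesis .
qed

lemma diag_mult_right:
  fixes D A :: "'a::comm_ring_1 mat"
  assumes D: "D \<in> carrier_mat n n" and A: "A \<in> carrier_mat p n" and dg: "diagonal_mat D"
    and i: "i < p" and j: "j < n"
  shows "(A * D) $$ (i,j) = A $$ (i,j) * D $$ (j,j)"
proof -
  have "(A * D) $$ (i,j) = (\<Sum>l\<in>{0..<n}. A $$ (i,l) * D $$ (l,j))"
    using D A i j by (simp add: scalar_prod_def)
  also have "\<dots> = (\<Sum>l\<in>{0..<n}. if l = j then A $$ (i,j) * D $$ (j,j) else 0)"
    using dg D j unfolding diagonal_mat_def by (intro sum.cong) auto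
  also have "\<dots> = A $$ (i,j) * D $$ (j,j)" using j by simp
  finally show ?thesis .
qed

lemma gram_diag_nonneg:
  fixes M :: "real mat"
  assumes M: "M \<in> carrier_mat m n" and i: "i < n"
  shows "(transpose_mat M * M) $$ (i,i) = col M i \<bullet> col M i" "(transpose_mat M * M) $$ (i,i) \<ge> 0"
proof -
  show "(transpose_mat M * M) $$ (i,i) = col M i \<bullet> col M i" using M i by simp
  thus "(transpose_mat M * M) $$ (i,i) \<ge> 0" unfolding scalar_prod_def by (auto intro: sum_nonneg)
qed

lemma tr_orth_conj:
  fixes Q D :: "'a::comm_ring_1 mat"
  assumes Q: "Q \<in> carrier_mat n n" and D: "D \<in> carrier_mat n n" and QQ: "transpose_mat Q * Q = 1\<^sub>m n"
  shows "tr (Q * D * transpose_mat Q) = tr D"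
proof -
  have "tr (Q * D * transpose_mat Q) = tr (transpose_mat Q * (Q * D))"
    by (rule tr_mult_comm, insert Q D, auto)
  also have "transpose_mat Q * (Q * D) = D" using Q D QQ
    by (simp add: assoc_mult_mat[of _ n n _ n _ n, symmetric])
  finally show ?thesis .
qed

lemma nn_formula:
  fixes Z Q D :: "real mat"
  assumes Z: "Z \<in> carrier_mat m n" and Q: "Q \<in> carrier_mat n n" and D: "D \<in> carrier_mat n n"
    and QQ: "transpose_mat Q * Q = 1\<^sub>m n" and QQ2: "Q * transpose_mat Q = 1\<^sub>m n"
    and dg: "diagonal_mat D" and eq: "transpose_mat Z * Z = Q * D * transpose_mat Q"
  shows "nuclear_norm Z = (\<Sum>i<n. sqrt (D $$ (i,i)))"
proof -
  have "similar_mat_wit (transpose_mat Z * Z) D Q (transpose_mat Q)"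
    by (rule similar_mat_witI[of _ _ n], insert Z Q D QQ QQ2 eq, auto)
  hence "similar_mat (transpose_mat Z * Z) D" unfolding similar_mat_def by blast
  hence cp: "char_poly (transpose_mat Z * Z) = char_poly D" by (rule char_poly_similar)
  have ut: "upper_triangular D" using dg D unfolding upper_triangular_def diagonal_mat_def by auto
  have "char_poly D = (\<Prod>a\<leftarrow>diag_mat D. [:- a, 1:])" by (rule char_poly_upper_triangular[OF D ut])
  hence "proots (char_poly (transpose_mat Z * Z)) = mset (diag_mat D)"
    using cp proots_linear_prod by simp
  hence "nuclear_norm Z = sum_list (map sqrt (diag_mat D))"
    unfolding nuclear_norm_def by (metis mset_map sum_mset_sum_list)
  also have "\<dots> = (\<Sum>i<n. sqrt (D $$ (i,i)))" using D unfolding diag_mat_def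
    by (simp add: sum_list_sum_nth atLeast0LessThan)
  finally show ?thesis .
qed

lemma nn_psd:
  fixes M :: "real mat"
  assumes M: "M \<in> carrier_mat n n" and sym: "transpose_mat M = M"
    and pos: "\<And>x. x \<in> carrier_vec n \<Longrightarrow> x \<bullet> (M *\<^sub>v x) \<ge> 0"
  shows "nuclear_norm M = tr M"
proof -
  obtain Q D where Q: "Q \<in> carrier_mat n n" and D: "D \<in> carrier_mat n n"
    and QQ: "transpose_mat Q * Q = 1\<^sub>m n" and QQ2: "Q * transpose_mat Q = 1\<^sub>m n"
    and dg: "diagonal_mat D" and Meq: "M = Q * D * transpose_mat Q"
    using spectral_real_sym[OF M sym] by blast
  have DQ: "D = transpose_mat Q * (M * Q)"
  proof -
    have "transpose_mat Q * (M * Q) = (transpose_mat Q * Q) * D * (transpose_mat Q * Q)"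
      unfolding Meq using Q D by (simp add: assoc_mult_mat[of _ n n _ n _ n])
    thus ?thesis using QQ D by simp
  qed
  have Dpos: "D $$ (i,i) \<ge> 0" if i: "i < n" for i
  proof -
    have "D $$ (i,i) = col Q i \<bullet> (M *\<^sub>v col Q i)"
      using DQ i Q M by (simp add: col_mult2[of _ n n _ n] mult_mat_vec_def)
    thus ?thesis using pos[of "col Q i"] Q i by auto
  qed
  define D2 where "D2 = D * D"
  have D2: "D2 \<in> carrier_mat n n" unfolding D2_def using D by auto
  have D2e: "D2 $$ (i,j) = (if i = j then (D $$ (i,i))^2 else 0)" if "i < n" "j < n" for i j
    unfolding D2_def using diag_mult_left[OF D D dg that] dg D that
    unfolding diagonal_mat_def by (auto simp: power2_eq_square)
  have dg2: "diagonal_mat D2" unfolding diagonal_mat_def using D2e D2 by auto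
  have "transpose_mat M * M = M * M" using sym by simp
  also have "\<dots> = Q * D2 * transpose_mat Q"
  proof -
    have "M * M = Q * D * (transpose_mat Q * Q) * D * transpose_mat Q"
      unfolding Meq using Q D by (simp add: assoc_mult_mat[of _ n n _ n _ n])
    thus ?thesis unfolding D2_def using QQ Q D by (simp add: assoc_mult_mat[of _ n n _ n _ n])
  qed
  finally have "nuclear_norm M = (\<Sum>i<n. sqrt (D2 $$ (i,i)))"
    using nn_formula[OF M Q D2 QQ QQ2 dg2] by simp
  also have "\<dots> = (\<Sum>i<n. D $$ (i,i))" using D2e Dpos by (intro sum.cong) auto
  also have "\<dots> = tr D" unfolding tr_def using D by simp
  also have "\<dots> = tr M" unfolding Meq using tr_orth_conj[OF Q D QQ] by simp
  finally show ?thesis .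
qed



lemma dot_le_sqrt:
  fixes a b :: "real vec"
  assumes a: "a \<in> carrier_vec n" and b: "b \<in> carrier_vec n" and aa: "a \<bullet> a \<le> 1"
  shows "a \<bullet> b \<le> sqrt (b \<bullet> b)"
proof -
  define A where "A = (\<Sum>k<n. a $ k * a $ k)"
  define B where "B = (\<Sum>k<n. b $ k * b $ k)"
  define C where "C = (\<Sum>k<n. a $ k * b $ k)"
  have AA: "a \<bullet> a = A" "b \<bullet> b = B" "a \<bullet> b = C"
    unfolding A_def B_def C_def scalar_prod_def using a b by (auto simp: atLeast0LessThan)
  have B0: "B \<ge> 0" unfolding B_def by (auto intro: sum_nonneg)
  define s where "s = sqrt B"
  have s0: "s \<ge> 0" unfolding s_def using B0 by auto
  have ss: "s * s = B" unfolding s_def using B0 by simp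
  show ?thesis
  proof (cases "s = 0")
    case True
    hence "B = 0" using ss by simp
    hence "\<forall>k\<in>{..<n}. b $ k * b $ k = 0" unfolding B_def
      by (subst sum_nonneg_eq_0_iff[symmetric]) auto
    hence "C = 0" unfolding C_def by auto
    thus ?thesis using AA True s_def by simp
  next
    case False
    hence sp: "s > 0" using s0 by auto
    have "0 \<le> (\<Sum>k<n. (s * a $ k - b $ k) * (s * a $ k - b $ k))" by (auto intro: sum_nonneg)
    also have "\<dots> = s * s * A - 2 * s * C + B"
      unfolding A_def B_def C_def
      by (simp add: algebra_simps sum.distrib sum_subtractf sum_distrib_left)
    finally have "2 * s * C \<le> s * s * A + B" by simp
    also have "\<dots> \<le> s * s + s * s" using aa AA ss sp B0 by (simp add: mult_left_le)
    finally have "C \<le> s" using sp by (simp add: algebra_simps)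
    thus ?thesis using AA s_def by simp
  qed
qed


lemma tr_bound:
  fixes Z P :: "real mat"
  assumes Z: "Z \<in> carrier_mat n n" and P: "P \<in> carrier_mat n n"
    and Ps: "transpose_mat P = P" and Pi: "P * P = P"
  shows "tr (Z * P) \<le> nuclear_norm Z"
proof -
  have S: "transpose_mat Z * Z \<in> carrier_mat n n" using Z by auto
  have Ssym: "transpose_mat (transpose_mat Z * Z) = transpose_mat Z * Z"
    using transpose_mult[of "transpose_mat Z" n n Z n] Z by auto
  obtain Q D where Q: "Q \<in> carrier_mat n n" and D: "D \<in> carrier_mat n n"
    and QQ: "transpose_mat Q * Q = 1\<^sub>m n" and QQ2: "Q * transpose_mat Q = 1\<^sub>m n"
    and dg: "diagonal_mat D" and Seq: "transpose_mat Z * Z = Q * D * transpose_mat Q"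
    using spectral_real_sym[OF S Ssym] by blast
  have nn: "nuclear_norm Z = (\<Sum>i<n. sqrt (D $$ (i,i)))" by (rule nn_formula[OF Z Q D QQ QQ2 dg Seq])
  have ZQ: "Z * Q \<in> carrier_mat n n" and PQ: "P * Q \<in> carrier_mat n n" using Z P Q by auto
  have Deq: "transpose_mat (Z * Q) * (Z * Q) = D"
  proof -
    have "transpose_mat (Z * Q) * (Z * Q) = transpose_mat Q * (transpose_mat Z * Z) * Q"
      using Z Q by (simp add: transpose_mult[of Z n n Q n] assoc_mult_mat[of _ n n _ n _ n])
    also have "\<dots> = (transpose_mat Q * Q) * D * (transpose_mat Q * Q)"
      unfolding Seq using Q D by (simp add: assoc_mult_mat[of _ n n _ n _ n])
    finally show ?thesis using QQ D by simp
  qed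
  define G where "G = transpose_mat Q * P * Q"
  have G: "G \<in> carrier_mat n n" unfolding G_def using Q P by auto
  have Geq: "transpose_mat (P * Q) * (P * Q) = G"
  proof -
    have "transpose_mat (P * Q) * (P * Q) = transpose_mat Q * (transpose_mat P * P) * Q"
      using P Q by (simp add: transpose_mult[of P n n Q n] assoc_mult_mat[of _ n n _ n _ n])
    thus ?thesis unfolding Ps Pi G_def .
  qed
  have Gsym: "transpose_mat G = G" unfolding Geq[symmetric]
    using transpose_mult[of "transpose_mat (P * Q)" n n "P * Q" n] PQ by simp
  have GG: "G * G = G"
  proof -
    have "G * G = transpose_mat Q * P * (Q * transpose_mat Q) * P * Q"
      unfolding G_def using Q P by (simp add: assoc_mult_mat[of _ n n _ n _ n])
    also have "\<dots> = transpose_mat Q * (P * P) * Q" unfolding QQ2 using Q P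
      by (simp add: assoc_mult_mat[of _ n n _ n _ n])
    finally show ?thesis unfolding Pi G_def .
  qed
  have Gle: "G $$ (i,i) \<le> 1" if i: "i < n" for i
  proof -
    have Gij: "G $$ (j,i) = G $$ (i,j)" if "j < n" for j
      using arg_cong[OF Gsym, of "\<lambda>M. M $$ (i,j)"] i that G by auto
    have "G $$ (i,i) = (G * G) $$ (i,i)" unfolding GG ..
    also have "\<dots> = (\<Sum>j\<in>{0..<n}. G $$ (i,j) * G $$ (i,j))"
      using G i Gij by (simp add: scalar_prod_def)
    finally have eq: "G $$ (i,i) = (\<Sum>j\<in>{0..<n}. G $$ (i,j) * G $$ (i,j))" .
    have "G $$ (i,i) * G $$ (i,i) \<le> (\<Sum>j\<in>{0..<n}. G $$ (i,j) * G $$ (i,j))"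
      by (rule member_le_sum[of i "{0..<n}" "\<lambda>j. G $$ (i,j) * G $$ (i,j)"]) (use i in auto)
    hence "G $$ (i,i) * G $$ (i,i) \<le> G $$ (i,i)" using eq by simp
    thus ?thesis using mult_strict_left_mono[of 1 "G $$ (i,i)" "G $$ (i,i)"]
      by (cases "G $$ (i,i) > 1") auto
  qed
  have "tr (Z * P) = tr (P * Z)" by (rule tr_mult_comm[OF Z P])
  also have "P * Z = P * Z * (Q * transpose_mat Q)" using QQ2 P Z by simp
  also have "tr (P * Z * (Q * transpose_mat Q)) = tr ((P * Z * Q) * transpose_mat Q)"
    using P Z Q by (simp add: assoc_mult_mat[of _ n n _ n _ n])
  also have "\<dots> = tr (transpose_mat Q * (P * Z * Q))"
    by (rule tr_mult_comm, insert P Z Q, auto)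
  also have "transpose_mat Q * (P * Z * Q) = transpose_mat (P * Q) * (Z * Q)"
    using P Z Q Ps by (simp add: transpose_mult[of P n n Q n] assoc_mult_mat[of _ n n _ n _ n])
  also have "tr (transpose_mat (P * Q) * (Z * Q)) = (\<Sum>i<n. col (P * Q) i \<bullet> col (Z * Q) i)"
    unfolding tr_def using PQ ZQ Q by simp
  also have "\<dots> \<le> (\<Sum>i<n. sqrt (D $$ (i,i)))"
  proof (rule sum_mono)
    fix i assume "i \<in> {..<n}"
    hence i: "i < n" by auto
    have "col (P * Q) i \<bullet> col (P * Q) i = G $$ (i,i)"
      using gram_diag_nonneg(1)[OF PQ i] Geq by simp
    hence a1: "col (P * Q) i \<bullet> col (P * Q) i \<le> 1" using Gle[OF i] by simp
    have "col (Z * Q) i \<bullet> col (Z * Q) i = D $$ (i,i)"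
      using gram_diag_nonneg(1)[OF ZQ i] Deq by simp
    thus "col (P * Q) i \<bullet> col (Z * Q) i \<le> sqrt (D $$ (i,i))"
      using dot_le_sqrt[OF _ _ a1, where b = "col (Z * Q) i" and n = n] PQ ZQ i by auto
  qed
  finally show ?thesis using nn by simp
qed




lemma rank_mult_le:
  fixes M N :: "real mat"
  assumes M: "M \<in> carrier_mat m k" and N: "N \<in> carrier_mat k p"
  shows "vec_space.rank m (M * N) \<le> vec_space.rank m M"
proof -
  interpret vec_space "TYPE(real)" m .
  let ?X = "set (cols M)" and ?Y = "set (cols (M * N))"
  have X: "?X \<subseteq> carrier_vec m" using M cols_dim by blast
  have MN: "M * N \<in> carrier_mat m p" using M N by auto
  have Y: "?Y \<subseteq> carrier_vec m" using MN cols_dim by blast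
  have YX: "?Y \<subseteq> span ?X"
  proof
    fix y assume "y \<in> ?Y"
    then obtain j where j: "j < p" and y: "y = col (M * N) j" using MN unfolding cols_def by auto
    have "y = M *\<^sub>v col N j" unfolding y using M N j by (simp add: col_mult2 mult_mat_vec_def)
    also have "M *\<^sub>v col N j = lincomb_list (\<lambda>i. col N j $ i) (cols M)"
    proof -
      have "lincomb_list (\<lambda>i. col N j $ i) (cols M) = mat_of_cols m (cols M) *\<^sub>v vec (length (cols M)) (\<lambda>i. col N j $ i)"
        by (rule lincomb_list_as_mat_mult, insert X, auto)
      also have "mat_of_cols m (cols M) = M" using M mat_of_cols_cols[of M] by auto
      also have "vec (length (cols M)) (\<lambda>i. col N j $ i) = col N j" using M N j by (intro eq_vecI) auto
      finally show ?thesis by simp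
    qed
    also have "\<dots> \<in> span_list (cols M)" by (rule in_span_listI) auto
    also have "span_list (cols M) = span ?X" by (rule span_list_as_span[OF X])
    finally show "y \<in> span ?X" .
  qed
  have span_eq: "span (?X \<union> ?Y) = span ?X"
  proof
    have "?X \<union> ?Y \<subseteq> span ?X" using YX in_own_span[OF X] by auto
    thus "span (?X \<union> ?Y) \<subseteq> span ?X" using span_subsetI[OF X] by blast
    show "span ?X \<subseteq> span (?X \<union> ?Y)" by (rule span_is_monotone) auto
  qed
  define C where "C = mat_of_cols m (cols M @ cols (M * N))"
  have C: "C \<in> carrier_mat m (length (cols M @ cols (M * N)))" unfolding C_def by auto
  have cC: "set (cols C) = ?X \<union> ?Y" unfolding C_def using X Y by (subst cols_mat_of_cols) auto
  have rC: "rank C = rank M" unfolding rank_def cC span_eq ..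
  obtain S where Smax: "maximal S (\<lambda>T. T \<subseteq> ?Y \<and> lin_indpt T)"
    using maximal_exists[of "(\<lambda>T. T \<subseteq> ?Y \<and> lin_indpt T)" "card ?Y" "{}"]
    by (meson List.finite_set card_mono empty_iff empty_subsetI finite_lin_indpt2 rev_finite_subset)
  have "rank (M * N) = card S" by (rule rank_card_indpt[OF MN Smax])
  also have "card S \<le> rank C"
    by (rule rank_ge_card_indpt[OF C], insert Smax cC, auto simp: maximal_def)
  finally show ?thesis using rC by simp
qed

lemma rank_orth_cols:
  fixes M :: "real mat"
  assumes M: "M \<in> carrier_mat m n" and dg: "diagonal_mat (transpose_mat M * M)"
  shows "vec_space.rank m M = card {i. i < n \<and> (transpose_mat M * M) $$ (i,i) \<noteq> 0}"
proof -
  interpret vec_space "TYPE(real)" m .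
  let ?G = "transpose_mat M * M"
  have Gij: "?G $$ (i,j) = col M i \<bullet> col M j" if "i < n" "j < n" for i j using that M by simp
  have G0: "col M i \<bullet> col M j = 0" if "i < n" "j < n" "i \<noteq> j" for i j
    using dg that M Gij unfolding diagonal_mat_def by auto
  define I where "I = {i. i < n \<and> ?G $$ (i,i) \<noteq> 0}"
  define U where "U = col M ` I"
  have cM: "col M i \<in> carrier_vec m" for i using M by auto
  have zero: "col M i = 0\<^sub>v m" if "i < n" "i \<notin> I" for i
  proof -
    have "col M i \<bullet> col M i = 0" using that Gij unfolding I_def by auto
    thus ?thesis using conjugate_square_eq_0_vec[OF cM[of i]] by (simp add: vec_conjugate_real)
  qed
  have nz: "col M i \<bullet> col M i \<noteq> 0" if "i \<in> I" for i using that Gij unfolding I_def by auto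
  have Ucarr: "U \<subseteq> carrier_vec m" unfolding U_def using cM by auto
  have finU: "finite U" unfolding U_def I_def by auto
  have inj: "inj_on (col M) I"
  proof (rule inj_onI)
    fix i j assume ij: "i \<in> I" "j \<in> I" "col M i = col M j"
    show "i = j"
    proof (rule ccontr)
      assume ne: "i \<noteq> j"
      have ijn: "i < n" "j < n" using ij(1,2) unfolding I_def by auto
      have "col M i \<bullet> col M j = 0" using G0[OF ijn ne] .
      thus False using nz[OF ij(1)] ij(3) by simp
    qed
  qed
  have li: "lin_indpt U"
  proof
    assume "lin_dep U"
    from finite_lin_dep[OF finU this Ucarr] obtain a v where
      lc: "lincomb a U = 0\<^sub>v m" and vU: "v \<in> U" and av: "a v \<noteq> 0" by auto
    from vU obtain i0 where i0: "i0 \<in> I" and v: "v = col M i0" unfolding U_def by auto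
    have "0 = lincomb a U \<bullet> v" unfolding lc using cM v by simp
    also have "lincomb a U \<bullet> v = (\<Sum>k<m. (\<Sum>x\<in>U. a x * x $ k) * v $ k)"
      unfolding scalar_prod_def using cM v Ucarr M
      by (auto simp: lincomb_index atLeast0LessThan intro!: sum.cong)
    also have "\<dots> = (\<Sum>x\<in>U. a x * (x \<bullet> v))"
      unfolding scalar_prod_def using cM v M
      by (simp add: sum_distrib_left sum_distrib_right sum.swap[of _ U] mult.assoc atLeast0LessThan)
    also have "\<dots> = (\<Sum>x\<in>U. if x = v then a v * (v \<bullet> v) else 0)"
    proof (intro sum.cong refl)
      fix x assume "x \<in> U"
      then obtain j where j: "j \<in> I" "x = col M j" unfolding U_def by auto
      show "a x * (x \<bullet> v) = (if x = v then a v * (v \<bullet> v) else 0)"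
      proof (cases "x = v")
        case False
        hence "j \<noteq> i0" using j v by auto
        hence "x \<bullet> v = 0" using G0[of j i0] j i0 v unfolding I_def by auto
        thus ?thesis using False by simp
      qed simp
    qed
    also have "\<dots> = a v * (v \<bullet> v)" using vU finU by simp
    finally show False using av nz[OF i0] v by simp
  qed
  have max: "maximal U (\<lambda>T. T \<subseteq> set (cols M) \<and> lin_indpt T)"
    unfolding maximal_def
  proof (intro conjI allI impI)
    show "U \<subseteq> set (cols M)" unfolding U_def I_def cols_def using M by auto
    show "lin_indpt U" by fact
    fix T assume T: "U \<subseteq> T \<and> T \<subseteq> set (cols M) \<and> lin_indpt T"
    have Tc: "T \<subseteq> carrier_vec m" using T cols_dim M by blast
    have z: "0\<^sub>v m \<notin> T" using vs_zero_lin_dep[OF Tc] T by auto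
    show "T = U"
    proof
      show "T \<subseteq> U"
      proof
        fix t assume t: "t \<in> T"
        then obtain j where j: "j < n" "t = col M j" using T M unfolding cols_def by auto
        show "t \<in> U"
        proof (cases "j \<in> I")
          case True thus ?thesis using j unfolding U_def by auto
        next
          case False thus ?thesis using zero[OF j(1) False] j t z by auto
        qed
      qed
    qed (use T in auto)
  qed
  have "rank M = card U" by (rule rank_card_indpt[OF M max])
  also have "\<dots> = card I" unfolding U_def by (rule card_image[OF inj])
  finally show ?thesis unfolding I_def .
qed



lemma massoc:
  fixes A B C :: "'a::semiring_0 mat"
  assumes "dim_col A = dim_row B" "dim_col B = dim_row C"
  shows "A * B * C = A * (B * C)"
proof -
  have "A \<in> carrier_mat (dim_row A) (dim_col A)" "B \<in> carrier_mat (dim_col A) (dim_col B)"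
    "C \<in> carrier_mat (dim_col B) (dim_col C)" using assms by (auto intro!: carrier_matI)
  thus ?thesis by (rule assoc_mult_mat)
qed

lemma tmult:
  fixes A B :: "'a::comm_semiring_0 mat"
  assumes "dim_col A = dim_row B"
  shows "transpose_mat (A * B) = transpose_mat B * transpose_mat A"
proof -
  have "A \<in> carrier_mat (dim_row A) (dim_col A)" "B \<in> carrier_mat (dim_col A) (dim_col B)"
    using assms by (auto intro!: carrier_matI)
  thus ?thesis by (rule transpose_mult)
qed

lemma pinv_exists:
  fixes A :: "real mat"
  assumes A: "A \<in> carrier_mat m n"
  shows "\<exists>Ap. Ap \<in> carrier_mat n m \<and> transpose_mat (Ap * A) = Ap * A \<and> (Ap * A) * (Ap * A) = Ap * A
    \<and> transpose_mat (A * Ap) = A * Ap \<and> (A * Ap) * (A * Ap) = A * Ap \<and> A * (Ap * A) = A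
    \<and> real (mrank A) = tr (Ap * A)"
proof -
  have S: "transpose_mat A * A \<in> carrier_mat n n" using A by auto
  have Ssym: "transpose_mat (transpose_mat A * A) = transpose_mat A * A"
    using A by (simp add: tmult)
  obtain Q D where Q: "Q \<in> carrier_mat n n" and D: "D \<in> carrier_mat n n"
    and QQ: "transpose_mat Q * Q = 1\<^sub>m n" and QQ2: "Q * transpose_mat Q = 1\<^sub>m n"
    and dg: "diagonal_mat D" and Seq: "transpose_mat A * A = Q * D * transpose_mat Q"
    using spectral_real_sym[OF S Ssym] by blast
  have AQ: "A * Q \<in> carrier_mat m n" using A Q by auto
  note dims = carrier_matD[OF A] carrier_matD[OF Q] carrier_matD[OF D]
  have QtQX: "transpose_mat Q * (Q * X) = X" if "dim_row X = n" for X :: "real mat"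
    using that Q QQ by (simp add: massoc[symmetric])
  have XQQt: "X * Q * transpose_mat Q = X" if "dim_col X = n" for X :: "real mat"
    using that Q QQ2 by (simp add: massoc)
  have Deq: "transpose_mat (A * Q) * (A * Q) = D"
  proof -
    have "transpose_mat (A * Q) * (A * Q) = transpose_mat Q * ((transpose_mat A * A) * Q)"
      using A Q by (simp add: tmult massoc)
    also have "\<dots> = D" unfolding Seq using Q D QtQX by (simp add: massoc dims QQ)
    finally show ?thesis .
  qed
  have Dii: "D $$ (i,i) = col (A * Q) i \<bullet> col (A * Q) i" if "i < n" for i
    using gram_diag_nonneg(1)[OF AQ that] Deq by simp
  define E where "E = mat n n (\<lambda>(i,j). if i = j \<and> D $$ (i,i) \<noteq> 0 then (1::real) else 0)"
  define Dp where "Dp = mat n n (\<lambda>(i,j). if i = j \<and> D $$ (i,i) \<noteq> 0 then 1 / D $$ (i,i) else 0)"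
  have E: "E \<in> carrier_mat n n" and Dp: "Dp \<in> carrier_mat n n" unfolding E_def Dp_def by auto
  have dgE: "diagonal_mat E" and dgDp: "diagonal_mat Dp"
    unfolding diagonal_mat_def E_def Dp_def by auto
  note dimsE = carrier_matD[OF E] carrier_matD[OF Dp]
  have Et: "transpose_mat E = E" and Dpt: "transpose_mat Dp = Dp"
    unfolding E_def Dp_def by (auto intro!: eq_matI)
  have DpD: "Dp * D = E"
  proof (rule eq_matI)
    fix i j assume "i < dim_row E" "j < dim_col E"
    hence ij: "i < n" "j < n" using E by auto
    have "(Dp * D) $$ (i,j) = Dp $$ (i,i) * D $$ (i,j)" by (rule diag_mult_left[OF Dp D dgDp ij])
    thus "(Dp * D) $$ (i,j) = E $$ (i,j)"
      using ij dg D unfolding Dp_def E_def diagonal_mat_def by auto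
  qed (use E Dp D in auto)
  have EE: "E * E = E"
  proof (rule eq_matI)
    fix i j assume "i < dim_row E" "j < dim_col E"
    hence ij: "i < n" "j < n" using E by auto
    have "(E * E) $$ (i,j) = E $$ (i,i) * E $$ (i,j)" by (rule diag_mult_left[OF E E dgE ij])
    thus "(E * E) $$ (i,j) = E $$ (i,j)" using ij unfolding E_def by auto
  qed (use E in auto)
  have AQE: "A * Q * E = A * Q"
  proof (rule eq_matI)
    fix i j assume "i < dim_row (A * Q)" "j < dim_col (A * Q)"
    hence ij: "i < m" "j < n" using AQ by auto
    have "(A * Q * E) $$ (i,j) = (A * Q) $$ (i,j) * E $$ (j,j)" by (rule diag_mult_right[OF E AQ dgE ij])
    also have "\<dots> = (A * Q) $$ (i,j)"
    proof (cases "D $$ (j,j) = 0")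
      case True
      hence "col (A * Q) j \<bullet> col (A * Q) j = 0" using Dii[OF ij(2)] by simp
      moreover have "col (A * Q) j \<in> carrier_vec m" using AQ by (metis carrier_matD(1) col_dim)
      ultimately have c0: "col (A * Q) j = 0\<^sub>v m"
        using conjugate_square_eq_0_vec[of "col (A * Q) j" m] by (simp add: vec_conjugate_real)
      have "(A * Q) $$ (i,j) = 0" using arg_cong[OF c0, of "\<lambda>v. v $ i"] ij carrier_matD[OF AQ] by simp
      thus ?thesis by simp
    next
      case False thus ?thesis using ij unfolding E_def by simp
    qed
    finally show "(A * Q * E) $$ (i,j) = (A * Q) $$ (i,j)" .
  qed (use AQ E in auto)
  define Ap where "Ap = Q * Dp * transpose_mat Q * transpose_mat A"
  have Ap: "Ap \<in> carrier_mat n m" unfolding Ap_def using Q Dp A by auto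
  note dimsAp = carrier_matD[OF Ap]
  have P1: "Ap * A = Q * E * transpose_mat Q"
  proof -
    have "Ap * A = Q * Dp * (transpose_mat Q * (transpose_mat A * A))"
      unfolding Ap_def using Q Dp A by (simp add: dims dimsE QQ QQ2 massoc)
    also have "\<dots> = Q * (Dp * D) * transpose_mat Q" unfolding Seq using Q Dp D
      by (simp add: dims dimsE QQ QQ2 massoc QtQX)
    finally show ?thesis unfolding DpD .
  qed
  have P1sym: "transpose_mat (Ap * A) = Ap * A"
    unfolding P1 using Q E by (simp add: dims dimsE QQ QQ2 tmult Et massoc)
  have P1id: "(Ap * A) * (Ap * A) = Ap * A"
  proof -
    have "(Ap * A) * (Ap * A) = Q * (E * E) * transpose_mat Q"
      unfolding P1 using Q E by (simp add: dims dimsE QQ QQ2 massoc QtQX)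
    thus ?thesis unfolding EE P1 .
  qed
  have AP1: "A * (Ap * A) = A"
  proof -
    have "A * (Ap * A) = A * Q * E * transpose_mat Q"
      unfolding P1 using A Q E by (simp add: dims dimsE QQ QQ2 massoc)
    also have "\<dots> = A" unfolding AQE using A Q by (simp add: dims dimsE QQ QQ2 XQQt)
    finally show ?thesis .
  qed
  have P2: "A * Ap = (A * Q) * Dp * transpose_mat (A * Q)"
    unfolding Ap_def using A Q Dp by (simp add: dims dimsE QQ QQ2 massoc tmult)
  have P2sym: "transpose_mat (A * Ap) = A * Ap"
    unfolding P2 using A Q Dp by (simp add: dims dimsE QQ QQ2 tmult Dpt massoc)
  have P2id: "(A * Ap) * (A * Ap) = A * Ap"
  proof -
    have "(A * Ap) * (A * Ap) = (A * (Ap * A)) * Ap" using A Ap by (simp add: dims dimsE QQ QQ2 massoc)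
    thus ?thesis unfolding AP1 .
  qed
  have r1: "vec_space.rank m (A * Q) \<le> vec_space.rank m A" by (rule rank_mult_le[OF A Q])
  have r2: "vec_space.rank m (A * Q * transpose_mat Q) \<le> vec_space.rank m (A * Q)"
    by (rule rank_mult_le[OF AQ], use Q in auto)
  have "A * Q * transpose_mat Q = A" using A Q by (simp add: dims dimsE QQ QQ2 XQQt)
  hence rk: "vec_space.rank m A = vec_space.rank m (A * Q)" using r1 r2 by simp
  have "vec_space.rank m (A * Q) = card {i. i < n \<and> D $$ (i,i) \<noteq> 0}"
    using rank_orth_cols[OF AQ] Deq dg by simp
  hence "real (mrank A) = real (card {i. i < n \<and> D $$ (i,i) \<noteq> 0})"
    unfolding mrank_def using rk A by simp
  also have "\<dots> = (\<Sum>i<n. E $$ (i,i))"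
  proof -
    have "(\<Sum>i<n. E $$ (i,i)) = (\<Sum>i<n. if D $$ (i,i) \<noteq> 0 then 1 else 0)"
      unfolding E_def by (intro sum.cong) auto
    also have "\<dots> = real (card {i. i < n \<and> D $$ (i,i) \<noteq> 0})"
      by (simp add: sum.If_cases lessThan_def Collect_conj_eq Int_commute)
    finally show ?thesis by simp
  qed
  also have "\<dots> = tr E" unfolding tr_def using E by simp
  also have "\<dots> = tr (Ap * A)" unfolding P1 using tr_orth_conj[OF Q E QQ] by simp
  finally show ?thesis using Ap P1sym P1id P2sym P2id AP1 by blast
qed



lemma tr_add:
  fixes A B :: "'a::comm_ring_1 mat"
  assumes "A \<in> carrier_mat n n" "B \<in> carrier_mat n n"
  shows "tr (A + B) = tr A + tr B"
  unfolding tr_def using assms by (simp add: sum.distrib)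

lemma gram_psd:
  fixes P :: "real mat"
  assumes P: "P \<in> carrier_mat n n" and x: "x \<in> carrier_vec n"
  shows "x \<bullet> ((transpose_mat P * P) *\<^sub>v x) \<ge> 0"
proof -
  have "(transpose_mat P * P) *\<^sub>v x = transpose_mat P *\<^sub>v (P *\<^sub>v x)"
    using P x by (simp add: assoc_mult_mat_vec[of _ n n _ n])
  hence "x \<bullet> ((transpose_mat P * P) *\<^sub>v x) = (transpose_mat P *\<^sub>v (P *\<^sub>v x)) \<bullet> x"
    using P x by (simp add: comm_scalar_prod[of x n])
  also have "\<dots> = (P *\<^sub>v x) \<bullet> (P *\<^sub>v x)" using transpose_vec_mult_scalar[OF P x, of "P *\<^sub>v x"] P x by simp
  also have "\<dots> \<ge> 0" unfolding scalar_prod_def by (auto intro: sum_nonneg)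
  finally show ?thesis .
qed

lemma lower_bound:
  fixes A Z L :: "real mat"
  assumes A: "A \<in> carrier_mat m n" and Z: "Z \<in> carrier_mat n n" and L: "L \<in> carrier_mat m m"
    and eq: "A = A * Z + L * A"
  shows "real (mrank A) \<le> nuclear_norm Z + nuclear_norm L"
proof -
  obtain Ap where Ap: "Ap \<in> carrier_mat n m" and P1s: "transpose_mat (Ap * A) = Ap * A"
    and P1i: "(Ap * A) * (Ap * A) = Ap * A" and P2s: "transpose_mat (A * Ap) = A * Ap"
    and P2i: "(A * Ap) * (A * Ap) = A * Ap" and rk: "real (mrank A) = tr (Ap * A)"
    using pinv_exists[OF A] by blast
  have P1: "Ap * A \<in> carrier_mat n n" and P2: "A * Ap \<in> carrier_mat m m" using A Ap by auto
  have "Ap * A = Ap * (A * Z) + Ap * (L * A)"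
    using arg_cong[OF eq, of "\<lambda>M. Ap * M"] mult_add_distrib_mat[of Ap n m "A * Z" n "L * A"] A Z L Ap
    by auto
  hence "tr (Ap * A) = tr (Ap * (A * Z)) + tr (Ap * (L * A))"
    using tr_add[of "Ap * (A * Z)" n "Ap * (L * A)"] A Z L Ap by auto
  also have "tr (Ap * (A * Z)) = tr (Z * (Ap * A))"
    using tr_mult_comm[OF P1 Z] A Z Ap by (simp add: massoc)
  also have "\<dots> \<le> nuclear_norm Z" by (rule tr_bound[OF Z P1 P1s P1i])
  also have "tr (Ap * (L * A)) = tr (L * (A * Ap))"
    using tr_mult_comm[of Ap n m "L * A"] A L Ap by (simp add: massoc)
  also have "\<dots> \<le> nuclear_norm L" by (rule tr_bound[OF L P2 P2s P2i])
  finally show ?thesis using rk by simp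
qed

lemma attain:
  fixes A :: "real mat"
  assumes A: "A \<in> carrier_mat m n"
  shows "\<exists>Z. Z \<in> carrier_mat n n \<and> A = A * Z + 0\<^sub>m m m * A
     \<and> nuclear_norm Z + nuclear_norm (0\<^sub>m m m) = real (mrank A)"
proof -
  obtain Ap where Ap: "Ap \<in> carrier_mat n m" and P1s: "transpose_mat (Ap * A) = Ap * A"
    and P1i: "(Ap * A) * (Ap * A) = Ap * A" and AP: "A * (Ap * A) = A"
    and rk: "real (mrank A) = tr (Ap * A)"
    using pinv_exists[OF A] by blast
  have P1: "Ap * A \<in> carrier_mat n n" using A Ap by auto
  have psd1: "x \<bullet> ((Ap * A) *\<^sub>v x) \<ge> 0" if "x \<in> carrier_vec n" for x
    using gram_psd[OF P1 that] P1s P1i by simp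
  have nn1: "nuclear_norm (Ap * A) = tr (Ap * A)" by (rule nn_psd[OF P1 P1s psd1])
  have z: "x \<bullet> (0\<^sub>m m m *\<^sub>v x) \<ge> 0" if "x \<in> carrier_vec m" for x :: "real vec"
  proof -
    have "0\<^sub>m m m *\<^sub>v x = 0\<^sub>v m" using that by (intro eq_vecI) (auto simp: scalar_prod_def)
    thus ?thesis using that by simp
  qed
  have nn0: "nuclear_norm (0\<^sub>m m m) = 0"
    using nn_psd[of "0\<^sub>m m m" m, OF _ _ z] by (simp add: tr_def)
  have "A = A * (Ap * A) + 0\<^sub>m m m * A" using AP A by simp
  thus ?thesis using nn1 nn0 rk P1 by auto
qed



lemma psd_conj_nn:
  fixes W V :: "real mat"
  assumes W: "W \<in> carrier_mat r r" and Ws: "transpose_mat W = W"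
    and Wp: "\<And>x. x \<in> carrier_vec r \<Longrightarrow> x \<bullet> (W *\<^sub>v x) \<ge> 0"
    and V: "V \<in> carrier_mat k r" and VV: "transpose_mat V * V = 1\<^sub>m r"
  shows "nuclear_norm (V * W * transpose_mat V) = tr W"
proof -
  let ?M = "V * W * transpose_mat V"
  have M: "?M \<in> carrier_mat k k" using V W by auto
  note dims = carrier_matD[OF V] carrier_matD[OF W]
  have Ms: "transpose_mat ?M = ?M" using V W Ws by (simp add: tmult massoc dims)
  have Mp: "x \<bullet> (?M *\<^sub>v x) \<ge> 0" if x: "x \<in> carrier_vec k" for x
  proof -
    let ?y = "transpose_mat V *\<^sub>v x"
    have y: "?y \<in> carrier_vec r" using V x by auto
    have "?M *\<^sub>v x = V *\<^sub>v (W *\<^sub>v ?y)" using V W x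
      by (simp add: assoc_mult_mat_vec[of _ k r _ k] assoc_mult_mat_vec[of _ r r _ k])
    hence "x \<bullet> (?M *\<^sub>v x) = x \<bullet> (V *\<^sub>v (W *\<^sub>v ?y))" by simp
    also have "\<dots> = ?y \<bullet> (W *\<^sub>v ?y)"
      using transpose_vec_mult_scalar[OF V _ x, of "W *\<^sub>v ?y"] W y by simp
    finally show ?thesis using Wp[OF y] by simp
  qed
  have "nuclear_norm ?M = tr ?M" by (rule nn_psd[OF M Ms Mp])
  also have "tr ?M = tr (V * (W * transpose_mat V))" using V W by (simp add: massoc dims)
  also have "\<dots> = tr (W * transpose_mat V * V)"
    using tr_mult_comm[of V k r "W * transpose_mat V"] V W by (simp add: dims)
  also have "W * transpose_mat V * V = W" using V W VV by (simp add: massoc dims)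
  finally show ?thesis .
qed

lemma diag_commute:
  fixes S W :: "real mat"
  assumes S: "S \<in> carrier_mat r r" and dS: "diagonal_mat S" and W: "W \<in> carrier_mat r r"
    and blk: "\<forall>i < r. \<forall>j < r. S $$ (i, i) \<noteq> S $$ (j, j) \<longrightarrow> W $$ (i, j) = 0"
  shows "S * W = W * S"
proof (rule eq_matI)
  fix i j assume "i < dim_row (W * S)" "j < dim_col (W * S)"
  hence ij: "i < r" "j < r" using S W by auto
  show "(S * W) $$ (i,j) = (W * S) $$ (i,j)"
    using diag_mult_left[OF S W dS ij] diag_mult_right[OF S W dS ij] blk ij
    by (cases "S $$ (i,i) = S $$ (j,j)") auto
qed (use S W in auto)

lemma add_minus_cancel_mat:
  fixes A E :: "real mat"
  assumes "A \<in> carrier_mat m n" "E \<in> carrier_mat m n"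
  shows "(A + E) - E = A" "(A - E) + E = A"
  using assms by (auto intro!: eq_matI)

theorem theorem4:
  fixes X :: "real mat" and lam :: real and f :: "real mat \<Rightarrow> real" and m n :: nat
  assumes X: "X \<in> carrier_mat m n" and lam: "lam > 0"
  shows "(\<forall>As Es U S V W.
            minimizer_P X lam f As Es \<longrightarrow>
            skinny_svd As (mrank As) U S V \<longrightarrow>
            W \<in> carrier_mat (mrank As) (mrank As) \<longrightarrow>
            (\<forall>i < mrank As. \<forall>j < mrank As. S $$ (i, i) \<noteq> S $$ (j, j) \<longrightarrow> W $$ (i, j) = 0) \<longrightarrow>
            psd W \<longrightarrow> psd (1\<^sub>m (mrank As) - W) \<longrightarrow>
            minimizer_U X lam f (V * W * transpose_mat V)
              (U * (1\<^sub>m (mrank As) - W) * transpose_mat U) Es)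
       \<and> (\<forall>Zs Ls Es. minimizer_U X lam f Zs Ls Es \<longrightarrow> minimizer_P X lam f (X - Es) Es)"
proof (intro conjI allI impI)
  note Xd = carrier_matD[OF X]
  have featP: "feasible_P X (X - E') E'" if "E' \<in> carrier_mat m n" for E'
    unfolding feasible_P_def using that X add_minus_cancel_mat(2)[OF X that] by auto
  {
    fix Zs Ls Es assume mU: "minimizer_U X lam f Zs Ls Es"
    have fU: "feasible_U X Zs Ls Es" and optU: "\<And>Z' L' E'. feasible_U X Z' L' E' \<Longrightarrow>
        nuclear_norm Zs + nuclear_norm Ls + lam * f Es \<le> nuclear_norm Z' + nuclear_norm L' + lam * f E'"
      using mU unfolding minimizer_U_def by auto
    have Zs: "Zs \<in> carrier_mat n n" and Ls: "Ls \<in> carrier_mat m m" and Es: "Es \<in> carrier_mat m n"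
      and eqU: "X - Es = (X - Es) * Zs + Ls * (X - Es)"
      using fU Xd unfolding feasible_U_def by auto
    have XE: "X - Es \<in> carrier_mat m n" using X Es by auto
    have lb: "real (mrank (X - Es)) \<le> nuclear_norm Zs + nuclear_norm Ls"
      by (rule lower_bound[OF XE Zs Ls eqU])
    show "minimizer_P X lam f (X - Es) Es"
      unfolding minimizer_P_def
    proof (intro conjI allI impI)
      show "feasible_P X (X - Es) Es" by (rule featP[OF Es])
      fix A' E' assume fP: "feasible_P X A' E'"
      hence A': "A' \<in> carrier_mat m n" and E': "E' \<in> carrier_mat m n" and XA: "X = A' + E'"
        unfolding feasible_P_def using Xd by auto
      have A'eq: "X - E' = A'" unfolding XA by (rule add_minus_cancel_mat(1)[OF A' E'])
      obtain Z' where Z': "Z' \<in> carrier_mat n n" and eqZ: "A' = A' * Z' + 0\<^sub>m m m * A'"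
        and nnZ: "nuclear_norm Z' + nuclear_norm (0\<^sub>m m m) = real (mrank A')"
        using attain[OF A'] by blast
      have "feasible_U X Z' (0\<^sub>m m m) E'"
        unfolding feasible_U_def A'eq using Z' E' eqZ Xd by auto
      from optU[OF this] have "nuclear_norm Zs + nuclear_norm Ls + lam * f Es \<le> real (mrank A') + lam * f E'"
        using nnZ by simp
      thus "real (mrank (X - Es)) + lam * f Es \<le> real (mrank A') + lam * f E'" using lb by simp
    qed
  }
  fix As Es U S V W
  assume mP: "minimizer_P X lam f As Es" and svd: "skinny_svd As (mrank As) U S V"
    and Wc: "W \<in> carrier_mat (mrank As) (mrank As)"
    and blk: "\<forall>i < mrank As. \<forall>j < mrank As. S $$ (i, i) \<noteq> S $$ (j, j) \<longrightarrow> W $$ (i, j) = 0"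
    and psdW: "psd W" and psdIW: "psd (1\<^sub>m (mrank As) - W)"
  define r where "r = mrank As"
  have W: "W \<in> carrier_mat r r" using Wc unfolding r_def .
  have fP: "feasible_P X As Es" and optP: "\<And>A' E'. feasible_P X A' E' \<Longrightarrow>
      real (mrank As) + lam * f Es \<le> real (mrank A') + lam * f E'"
    using mP unfolding minimizer_P_def by auto
  have As: "As \<in> carrier_mat m n" and Es: "Es \<in> carrier_mat m n" and XAs: "X = As + Es"
    using fP Xd unfolding feasible_P_def by auto
  have U: "U \<in> carrier_mat m r" and V: "V \<in> carrier_mat n r" and S: "S \<in> carrier_mat r r"
    and UU: "transpose_mat U * U = 1\<^sub>m r" and VV: "transpose_mat V * V = 1\<^sub>m r"
    and dS: "diagonal_mat S" and Aeq: "As = U * S * transpose_mat V"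
    using svd As unfolding skinny_svd_def r_def by auto
  define IW where "IW = 1\<^sub>m r - W"
  have IW: "IW \<in> carrier_mat r r" unfolding IW_def using W by auto
  have Ws: "transpose_mat W = W" and Wp: "\<And>x. x \<in> carrier_vec r \<Longrightarrow> x \<bullet> (W *\<^sub>v x) \<ge> 0"
    using psdW W unfolding psd_def by auto
  have IWs: "transpose_mat IW = IW" and IWp: "\<And>x. x \<in> carrier_vec r \<Longrightarrow> x \<bullet> (IW *\<^sub>v x) \<ge> 0"
    using psdIW IW unfolding psd_def IW_def r_def by auto
  note dims = carrier_matD[OF U] carrier_matD[OF V] carrier_matD[OF S] carrier_matD[OF W]
    carrier_matD[OF IW]
  define Zs where "Zs = V * W * transpose_mat V"
  define Ls where "Ls = U * IW * transpose_mat U"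
  have Zs: "Zs \<in> carrier_mat n n" unfolding Zs_def using V W by auto
  have Ls: "Ls \<in> carrier_mat m m" unfolding Ls_def using U IW by auto
  have SW: "S * W = W * S" by (rule diag_commute[OF S dS W], use blk r_def in auto)
  have XEs: "X - Es = As" unfolding XAs by (rule add_minus_cancel_mat(1)[OF As Es])
  have VtVX: "transpose_mat V * (V * Y) = Y" if "dim_row Y = r" for Y :: "real mat"
    using that VV by (simp add: massoc[symmetric] dims)
  have UtUX: "transpose_mat U * (U * Y) = Y" if "dim_row Y = r" for Y :: "real mat"
    using that UU by (simp add: massoc[symmetric] dims)
  have eq1: "As * Zs = U * (S * W) * transpose_mat V"
    unfolding Aeq Zs_def by (simp add: massoc dims VtVX)
  have eq2: "Ls * As = U * (IW * S) * transpose_mat V"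
    unfolding Aeq Ls_def by (simp add: massoc dims UtUX)
  have mid: "S * W + IW * S = S"
  proof -
    have "IW * S = S - W * S" unfolding IW_def using W S
      by (simp add: minus_mult_distrib_mat[of _ r r _ _ r])
    thus ?thesis unfolding SW using S W by (auto intro!: eq_matI)
  qed
  have feas: "As = As * Zs + Ls * As"
  proof -
    have "As * Zs + Ls * As = U * (S * W) * transpose_mat V + U * (IW * S) * transpose_mat V"
      unfolding eq1 eq2 ..
    also have "\<dots> = (U * (S * W) + U * (IW * S)) * transpose_mat V"
      using U S W IW V by (simp add: add_mult_distrib_mat[of _ m r _ _ n])
    also have "U * (S * W) + U * (IW * S) = U * (S * W + IW * S)"
      using U S W IW by (simp add: mult_add_distrib_mat[of _ m r _ r])
    finally show ?thesis unfolding mid Aeq by simp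
  qed
  have nnZ: "nuclear_norm Zs = tr W" unfolding Zs_def by (rule psd_conj_nn[OF W Ws Wp V VV])
  have nnL: "nuclear_norm Ls = tr IW" unfolding Ls_def by (rule psd_conj_nn[OF IW IWs IWp U UU])
  have trs: "tr W + tr IW = real r"
  proof -
    have "W + IW = 1\<^sub>m r" unfolding IW_def using W by (auto intro!: eq_matI)
    hence "tr W + tr IW = tr (1\<^sub>m r)" using tr_add[OF W IW] by simp
    thus ?thesis by (simp add: tr_def)
  qed
  show "minimizer_U X lam f (V * W * transpose_mat V) (U * (1\<^sub>m (mrank As) - W) * transpose_mat U) Es"
    unfolding Zs_def[symmetric] IW_def[symmetric] r_def[symmetric] Ls_def[symmetric]
    unfolding minimizer_U_def
  proof (intro conjI allI impI)
    show "feasible_U X Zs Ls Es" unfolding feasible_U_def XEs using Zs Ls Es Xd feas by auto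
    fix Z' L' E' assume fU': "feasible_U X Z' L' E'"
    hence Z': "Z' \<in> carrier_mat n n" and L': "L' \<in> carrier_mat m m" and E': "E' \<in> carrier_mat m n"
      and eq': "X - E' = (X - E') * Z' + L' * (X - E')"
      unfolding feasible_U_def using Xd by auto
    have XE': "X - E' \<in> carrier_mat m n" using X E' by auto
    have "real r + lam * f Es \<le> real (mrank (X - E')) + lam * f E'"
      using optP[OF featP[OF E']] unfolding r_def .
    also have "real (mrank (X - E')) \<le> nuclear_norm Z' + nuclear_norm L'"
      by (rule lower_bound[OF XE' Z' L' eq'])
    finally show "nuclear_norm Zs + nuclear_norm Ls + lam * f Es \<le> nuclear_norm Z' + nuclear_norm L' + lam * f E'"
      using nnZ nnL trs by simp
  qed
qed


end
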